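(* In the setting of the context, assume (G2') and ($\overline G{}_3'$), and let $\tilde\rho$ be a metric on $X$ inducing its topology, with constants $\gamma\ge1$, $C\ge1$ such that $C^{-1}\tilde\rho(x,y)^{-\gamma}\le\tilde G(x,y)\le C\tilde\rho(x,y)^{-\gamma}$ for all $x,y\in X$. Then there exists $\tilde c_3\ge1$ such that for all $x\in X_0$, $0<r<\tilde R_0(x)$ and $y\in X\setminus\tilde U(x,r)$, $$\big\|\tilde\varepsilon_y^{\overline{\tilde U(x,r)}}\big\|\ \ge\ \tilde c_3^{-1}\,r^{\gamma}\,\tilde G(y,x).$$
   Context: $(X,\rho)$ separable metric space, $X_0\subsetneq X$ open. For every open $U\subseteq X$ and $x\in X$ a finite Borel measure $\mu_x^U$ is given with, for all open $U,V$ and $x$: $\mu_x^U(U)=0$, $\|\mu_x^U\|:=\mu_x^U(X)\le1$, $\mu_x^U=\varepsilon_x$ (Dirac) if $x\notin U$; $y\mapsto\mu_y^U(E)$ universally measurable for Borel $E$; $\mu_x^U=\int\mu_y^U\,d\mu_x^V(y)$ if $V\subseteq U$. For closed $A$, $\varepsilon_x^A:=\mu_x^{X\setminus A}$ and $\tilde\varepsilon_x^A:=\frac{w}{w(x)}\varepsilon_x^A$ (the measure with density $w/w(x)$ w.r.t. $\varepsilon_x^A$). $G\colon X\times X\to(0,\infty]$ Borel; $V(x,s):=\{y:G(y,x)^{-1}<s\}$; $S_0(x):=\sup\{s>0:\overline{V(x,s)}\subseteq X_0\}$ for $x\in X_0$. $\tilde U(x,r):=\{y:\tilde\rho(x,y)<r\}$,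 $\tilde R_0(x):=\sup\{r>0:\overline{\tilde U(x,r)}\subseteq X_0\}$. (G2'): for every $x$, $G(x,x)=\lim_{y\to x}G(y,x)=\infty$; there is a Borel $w$ with $0<w\le1$ and $\int w\,d\mu_x^U\le w(x)$ for all open $U$, $x$; there is $\tilde c>1$ with $\tilde G(x,z)\wedge\tilde G(y,z)\le\tilde c\tilde G(x,y)$ for all $x,y,z$, where $\tilde G(x,y):=G(x,y)/(w(x)w(y))$; $\lambda:=\inf w(X_0)>0$; for each $x$ and neighborhood $V$ of $x$, $G(\cdot,x)/w$ is bounded on $X\setminus V$. ($\overline G{}_3'$): there is $c_3\ge1$ with $\|\varepsilon_y^{\overline{V(x,s)}}\|\ge c_3^{-1}sG(y,x)$ for all $x\in X_0$, $0<s<S_0(x)$, $y\in X\setminus V(x,s)$. *)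

theory Defs
  imports "HOL-Probability.Probability"
begin

definition universally_measurable :: "('a::topological_space \<Rightarrow> ennreal) \<Rightarrow> bool" where
  "universally_measurable f \<longleftrightarrow>
     (\<forall>\<nu>::'a measure. finite_measure \<nu> \<and> sets \<nu> = sets borel \<longrightarrow> f \<in> borel_measurable (completion \<nu>))"

definition harmonic_kernel :: "('a::topological_space set \<Rightarrow> 'a \<Rightarrow> 'a measure) \<Rightarrow> bool" where
  "harmonic_kernel mu \<longleftrightarrow>
     (\<forall>U x. open U \<longrightarrow> sets (mu U x) = sets borel) \<and>
     (\<forall>U x. open U \<longrightarrow> emeasure (mu U x) U = 0) \<and>
     (\<forall>U x. open U \<longrightarrow> emeasure (mu U x) UNIV \<le> 1) \<and>
     (\<forall>U x. open U \<and> x \<notin> U \<longrightarrow> mu U x = return borel x) \<and>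
     (\<forall>U E. open U \<and> E \<in> sets borel \<longrightarrow> universally_measurable (\<lambda>y. emeasure (mu U y) E)) \<and>
     (\<forall>U V x E. open U \<and> open V \<and> V \<subseteq> U \<and> E \<in> sets borel \<longrightarrow>
        emeasure (mu U x) E = (\<integral>\<^sup>+ y. emeasure (mu U y) E \<partial>(completion (mu V x))))"

definition eps :: "('a set \<Rightarrow> 'a \<Rightarrow> 'a measure) \<Rightarrow> 'a set \<Rightarrow> 'a \<Rightarrow> 'a measure" where
  "eps mu A x = mu (- A) x"

text \<open>Total mass of \<tilde>\<epsilon>_x^A = (w / w x) \<epsilon>_x^A.\<close>
definition eps_tilde_norm :: "('a set \<Rightarrow> 'a \<Rightarrow> 'a measure) \<Rightarrow> ('a \<Rightarrow> real) \<Rightarrow> 'a set \<Rightarrow> 'a \<Rightarrow> ennreal" where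
  "eps_tilde_norm mu w A x = (\<integral>\<^sup>+ z. ennreal (w z / w x) \<partial>(eps mu A x))"

definition Gt :: "('a \<Rightarrow> 'a \<Rightarrow> ennreal) \<Rightarrow> ('a \<Rightarrow> real) \<Rightarrow> 'a \<Rightarrow> 'a \<Rightarrow> ennreal" where
  "Gt G w x y = G x y / ennreal (w x * w y)"

definition Vset :: "('a \<Rightarrow> 'a \<Rightarrow> ennreal) \<Rightarrow> 'a \<Rightarrow> real \<Rightarrow> 'a set" where
  "Vset G x s = {y. inverse (G y x) < ennreal s}"

definition S0 :: "('a::topological_space \<Rightarrow> 'a \<Rightarrow> ennreal) \<Rightarrow> 'a set \<Rightarrow> 'a \<Rightarrow> ereal" where
  "S0 G X0 x = Sup {ereal s | s. s > 0 \<and> closure (Vset G x s) \<subseteq> X0}"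

definition Ut :: "('a \<Rightarrow> 'a \<Rightarrow> real) \<Rightarrow> 'a \<Rightarrow> real \<Rightarrow> 'a set" where
  "Ut rt x r = {y. rt x y < r}"

definition R0t :: "('a::topological_space \<Rightarrow> 'a \<Rightarrow> real) \<Rightarrow> 'a set \<Rightarrow> 'a \<Rightarrow> ereal" where
  "R0t rt X0 x = Sup {ereal r | r. r > 0 \<and> closure (Ut rt x r) \<subseteq> X0}"

definition neg_pow :: "real \<Rightarrow> real \<Rightarrow> ennreal" where
  "neg_pow t \<gamma> = (if t = 0 then \<infinity> else ennreal (t powr (- \<gamma>)))"

definition cond_G2' :: "('a::topological_space set \<Rightarrow> 'a \<Rightarrow> 'a measure) \<Rightarrow> ('a \<Rightarrow> 'a \<Rightarrow> ennreal) \<Rightarrow> ('a \<Rightarrow> real) \<Rightarrow> 'a set \<Rightarrow> bool" where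
  "cond_G2' mu G w X0 \<longleftrightarrow>
     (\<forall>x. G x x = \<infinity> \<and> ((\<lambda>y. G y x) \<longlongrightarrow> \<infinity>) (at x)) \<and>
     w \<in> borel_measurable borel \<and> (\<forall>x. 0 < w x \<and> w x \<le> 1) \<and>
     (\<forall>U x. open U \<longrightarrow> (\<integral>\<^sup>+ y. ennreal (w y) \<partial>(mu U x)) \<le> ennreal (w x)) \<and>
     (\<exists>c. c > 1 \<and> (\<forall>x y z. min (Gt G w x z) (Gt G w y z) \<le> ennreal c * Gt G w x y)) \<and>
     (\<exists>lam>0. \<forall>x\<in>X0. lam \<le> w x) \<and>
     (\<forall>x V. open V \<and> x \<in> V \<longrightarrow> (\<exists>M::real. \<forall>y. y \<notin> V \<longrightarrow> G y x / ennreal (w y) \<le> ennreal M))"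

definition cond_G3' :: "('a::topological_space set \<Rightarrow> 'a \<Rightarrow> 'a measure) \<Rightarrow> ('a \<Rightarrow> 'a \<Rightarrow> ennreal) \<Rightarrow> 'a set \<Rightarrow> bool" where
  "cond_G3' mu G X0 \<longleftrightarrow>
     (\<exists>c3::real. c3 \<ge> 1 \<and> (\<forall>x\<in>X0. \<forall>s. 0 < s \<and> ereal s < S0 G X0 x \<longrightarrow>
        (\<forall>y. y \<notin> Vset G x s \<longrightarrow>
           emeasure (eps mu (closure (Vset G x s)) y) UNIV \<ge> ennreal (s / c3) * G y x)))"

end

theory Submission
  imports Defs
begin

lemma hk_facts:
  assumes hk: "harmonic_kernel mu" and U: "open U"
  shows "sets (mu U x) = sets borel" "space (mu U x) = UNIV" "emeasure (mu U x) U = 0"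
    "emeasure (mu U x) UNIV \<le> 1"
proof -
  note h = hk[unfolded harmonic_kernel_def]
  show s: "sets (mu U x) = sets borel" using h[THEN conjunct1, rule_format, OF U] .
  show "space (mu U x) = UNIV" using sets_eq_imp_space_eq[OF s] by simp
  show "emeasure (mu U x) U = 0" using h[THEN conjunct2, THEN conjunct1, rule_format, OF U] .
  show "emeasure (mu U x) UNIV \<le> 1" using h[THEN conjunct2, THEN conjunct2, THEN conjunct1, rule_format, OF U] .
qed

lemma hk_comp:
  assumes hk: "harmonic_kernel mu" and "open U" "open V" "V \<subseteq> U" "E \<in> sets borel"
  shows "emeasure (mu U x) E = (\<integral>\<^sup>+ y. emeasure (mu U y) E \<partial>(completion (mu V x)))"
proof -
  note h = hk[unfolded harmonic_kernel_def]
  show ?thesis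
    using h[THEN conjunct2, THEN conjunct2, THEN conjunct2, THEN conjunct2, THEN conjunct2, rule_format] assms(2-)
    by blast
qed

lemma eps_mono:
  assumes hk: "harmonic_kernel mu" and "closed A" "closed B" "A \<subseteq> B"
  shows "emeasure (eps mu A y) UNIV \<le> emeasure (eps mu B y) UNIV"
proof -
  have o: "open (-A)" "open (-B)" "-B \<subseteq> -A" using assms by auto
  have "emeasure (mu (-A) y) UNIV = (\<integral>\<^sup>+ z. emeasure (mu (-A) z) UNIV \<partial>(completion (mu (-B) y)))"
    by (rule hk_comp[OF hk o]) simp
  also have "\<dots> \<le> (\<integral>\<^sup>+ z. 1 \<partial>(completion (mu (-B) y)))"
    by (rule nn_integral_mono) (rule hk_facts(4)[OF hk o(1)])
  also have "\<dots> = emeasure (mu (-B) y) UNIV"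
  proof -
    have sp: "space (mu (-B) y) = UNIV" "UNIV \<in> sets (mu (-B) y)"
      using hk_facts(1,2)[OF hk o(2), of y] by auto
    have "(\<integral>\<^sup>+ z. 1 \<partial>(completion (mu (-B) y))) = emeasure (completion (mu (-B) y)) UNIV"
      using sp by (simp only: nn_integral_const space_completion mult_1)
    also have "\<dots> = emeasure (mu (-B) y) UNIV" using sp(2) by simp
    finally show ?thesis .
  qed
  finally show ?thesis unfolding eps_def .
qed

lemma eps_weight:
  assumes hk: "harmonic_kernel mu" and B: "closed B" and l: "\<forall>z\<in>B. l \<le> w z" "0 \<le> l" and wy: "w y > 0"
  shows "ennreal (l / w y) * emeasure (eps mu B y) UNIV \<le> eps_tilde_norm mu w B y"
proof -
  define M where "M = mu (-B) y"
  have o: "open (-B)" using B by auto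
  note f = hk_facts[OF hk o, of y, folded M_def]
  have Bs: "B \<in> sets M" using f(1) B by simp
  have Cs: "-B \<in> sets M" using f(1) o by simp
  have "emeasure M UNIV \<le> emeasure M B + emeasure M (-B)"
    using emeasure_subadditive[OF Bs Cs] by (simp add: Un_commute)
  hence "emeasure M UNIV \<le> emeasure M B" using f(3) by simp
  hence "ennreal (l / w y) * emeasure M UNIV \<le> ennreal (l / w y) * emeasure M B"
    by (rule mult_left_mono) simp
  also have "\<dots> = (\<integral>\<^sup>+ z. ennreal (l / w y) * indicator B z \<partial>M)"
    using nn_integral_cmult_indicator[OF Bs] by simp
  also have "\<dots> \<le> (\<integral>\<^sup>+ z. ennreal (w z / w y) \<partial>M)"
  proof (rule nn_integral_mono)
    fix z assume "z \<in> space M"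
    show "ennreal (l / w y) * indicator B z \<le> ennreal (w z / w y)"
    proof (cases "z \<in> B")
      case True
      then have "l / w y \<le> w z / w y" using l wy by (simp add: divide_right_mono)
      then show ?thesis using True by (simp add: ennreal_leI)
    qed simp
  qed
  finally show ?thesis unfolding eps_tilde_norm_def eps_def M_def .
qed


lemma rt_nonneg:
  assumes "\<forall>x y. rt x y = 0 \<longleftrightarrow> x = y" "\<forall>x y. rt x y = rt y x"
      "\<forall>x y z. rt x z \<le> rt x y + rt y z"
  shows "rt a b \<ge> (0::real)"
proof -
  have "rt a a \<le> rt a b + rt b a" using assms(3) by blast
  moreover have "rt a a = 0" using assms(1) by blast
  moreover have "rt b a = rt a b" using assms(2) by blast
  ultimately show ?thesis by linarith
qed

lemma closure_Ut_sub:
  fixes rt :: "'a::metric_space \<Rightarrow> 'a \<Rightarrow> real"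
  assumes rt3: "\<forall>x y z. rt x z \<le> rt x y + rt y z" and rt2: "\<forall>x y. rt x y = rt y x"
    and top: "\<forall>S. open S \<longleftrightarrow> (\<forall>x\<in>S. \<exists>e>0. \<forall>y. rt x y < e \<longrightarrow> y \<in> S)"
  shows "closure (Ut rt x t) \<subseteq> {z. rt x z \<le> t}"
proof (rule closure_minimal)
  show "Ut rt x t \<subseteq> {z. rt x z \<le> t}" by (auto simp: Ut_def)
  have "open (- {z. rt x z \<le> t})"
    unfolding top[rule_format]
  proof
    fix z assume "z \<in> - {z. rt x z \<le> t}"
    then have z: "rt x z > t" by simp
    show "\<exists>e>0. \<forall>y. rt z y < e \<longrightarrow> y \<in> - {z. rt x z \<le> t}"
    proof (intro exI[of _ "rt x z - t"] conjI allI impI)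
      fix y assume "rt z y < rt x z - t"
      moreover have "rt x z \<le> rt x y + rt y z" using rt3 by blast
      moreover have "rt y z = rt z y" using rt2 by blast
      ultimately show "y \<in> - {z. rt x z \<le> t}" by simp
    qed (use z in simp)
  qed
  then show "closed {z. rt x z \<le> t}" by (simp add: closed_def)
qed

lemma Vsub:
  assumes rt1: "\<forall>x y. rt x y = 0 \<longleftrightarrow> x = y" and rt2: "\<forall>x y. rt x y = rt y x"
    and G_pos: "\<forall>x y. G x y > 0" and w: "\<forall>x. 0 < w x \<and> w x \<le> 1"
    and \<gamma>: "\<gamma> > 0" and C: "C > 0"
    and comparable: "\<forall>x y. Gt G w x y \<le> ennreal C * neg_pow (rt x y) \<gamma>"
    and t: "t > 0" and rtn: "\<forall>a b. rt a b \<ge> 0"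
  shows "Vset G x (t powr \<gamma> / C) \<subseteq> Ut rt x t"
proof
  fix z assume zV: "z \<in> Vset G x (t powr \<gamma> / C)"
  show "z \<in> Ut rt x t"
  proof (rule ccontr)
    assume "z \<notin> Ut rt x t"
    then have "\<not> rt x z < t" by (simp add: Ut_def)
    moreover have "rt z x = rt x z" using rt2 by blast
    ultimately have dt: "rt z x \<ge> t" by linarith
    define d where "d = rt z x"
    have d0: "d > 0" using dt t d_def by simp
    define a where "a = C * d powr (- \<gamma>)"
    have a0: "a > 0" using C d0 by (simp add: a_def)
    have "Gt G w z x \<le> ennreal C * ennreal (d powr (-\<gamma>))"
      using comparable[rule_format, of z x] d0 by (simp add: neg_pow_def d_def)
    also have "\<dots> = ennreal a" using C by (simp add: a_def ennreal_mult)
    finally have Gta: "Gt G w z x \<le> ennreal a" .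
    have wp: "0 < w z * w x" "w z * w x \<le> 1" using w by (auto intro: mult_le_one less_imp_le)
    have "G z x = Gt G w z x * ennreal (w z * w x)"
    proof -
      have b1: "ennreal (w z * w x) \<noteq> 0" using wp(1) by (simp add: ennreal_eq_0_iff)
      have b2: "ennreal (w z * w x) < top" by simp
      have "G z x / ennreal (w z * w x) * ennreal (w z * w x) = G z x * (ennreal (w z * w x) / ennreal (w z * w x))"
        by (rule ennreal_divide_times)
      also have "\<dots> = G z x" using b1 b2 by simp
      finally show ?thesis unfolding Gt_def by simp
    qed
    also have "\<dots> \<le> Gt G w z x * 1"
      by (rule mult_left_mono) (use wp in auto)
    finally have Ga: "G z x \<le> ennreal a" using Gta by simp
    have "G z x < top" using Ga ennreal_less_top[of a] by (rule le_less_trans)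
    then have ntop: "G z x \<noteq> top" by simp
    define g where "g = enn2real (G z x)"
    have gG: "G z x = ennreal g" using ntop by (simp add: g_def ennreal_enn2real_if)
    have gnn: "g \<ge> 0" by (simp add: g_def)
    have "g \<noteq> 0"
    proof
      assume "g = 0"
      then have "G z x = 0" using gG by simp
      moreover have "G z x > 0" using G_pos by blast
      ultimately show False by simp
    qed
    then have g0: "g > 0" using gnn by simp
    have ga: "g \<le> a" using Ga gG a0 by simp
    have "inverse (G z x) = ennreal (inverse g)" using gG g0 by (simp add: inverse_ennreal)
    with zV have "ennreal (inverse g) < ennreal (t powr \<gamma> / C)" by (simp add: Vset_def)
    then have lt: "inverse g < t powr \<gamma> / C" using g0 by (subst (asm) ennreal_less_iff) auto
    have "inverse a \<le> inverse g" using ga g0 by (simp add: le_imp_inverse_le)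
    moreover have "inverse a = d powr \<gamma> / C"
      using C d0 by (simp add: a_def powr_minus field_simps)
    moreover have "t powr \<gamma> \<le> d powr \<gamma>" using dt t \<gamma> d_def by (simp add: powr_mono2)
    moreover have "t powr \<gamma> / C \<le> d powr \<gamma> / C"
      by (rule divide_right_mono) (use C \<open>t powr \<gamma> \<le> d powr \<gamma>\<close> in simp_all)
    ultimately show False using lt by linarith
  qed
qed


lemma G_Gt:
  assumes "(0::real) < a"
  shows "(g::ennreal) = g / ennreal a * ennreal a"
proof -
  have b1: "ennreal a \<noteq> 0" using assms by simp
  have b2: "ennreal a < top" by simp
  have "g / ennreal a * ennreal a = g * (ennreal a / ennreal a)"
    by (rule ennreal_divide_times)
  also have "\<dots> = g" using b1 b2 by simp
  finally show ?thesis by simp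
qed

theorem proposition7p4:
  fixes mu :: "'a::metric_space set \<Rightarrow> 'a \<Rightarrow> 'a measure"
    and G :: "'a \<Rightarrow> 'a \<Rightarrow> ennreal"
    and w :: "'a \<Rightarrow> real"
    and X0 :: "'a set"
    and rt :: "'a \<Rightarrow> 'a \<Rightarrow> real"
    and \<gamma> C :: real
  assumes separable: "\<exists>D::'a set. countable D \<and> closure D = UNIV"
    and X0: "open X0" "X0 \<noteq> UNIV"
    and kernel: "harmonic_kernel mu"
    and G_borel: "(\<lambda>p. G (fst p) (snd p)) \<in> borel_measurable borel"
    and G_pos: "\<forall>x y. G x y > 0"
    and G2': "cond_G2' mu G w X0"
    and G3': "cond_G3' mu G X0"
    and rt_metric: "\<forall>x y. rt x y = 0 \<longleftrightarrow> x = y" "\<forall>x y. rt x y = rt y x"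
      "\<forall>x y z. rt x z \<le> rt x y + rt y z"
    and rt_topology: "\<forall>S. open S \<longleftrightarrow> (\<forall>x\<in>S. \<exists>e>0. \<forall>y. rt x y < e \<longrightarrow> y \<in> S)"
    and \<gamma>: "\<gamma> \<ge> 1" and C: "C \<ge> 1"
    and comparable: "\<forall>x y. ennreal (1 / C) * neg_pow (rt x y) \<gamma> \<le> Gt G w x y
                         \<and> Gt G w x y \<le> ennreal C * neg_pow (rt x y) \<gamma>"
  shows "\<exists>c3t::real. c3t \<ge> 1 \<and>
     (\<forall>x\<in>X0. \<forall>r. 0 < r \<and> ereal r < R0t rt X0 x \<longrightarrow>
        (\<forall>y. y \<notin> Ut rt x r \<longrightarrow>
           eps_tilde_norm mu w (closure (Ut rt x r)) y \<ge> ennreal (r powr \<gamma> / c3t) * Gt G w y x))"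
  proof -
  have rtn: "\<forall>a b. rt a b \<ge> 0" using rt_nonneg[OF rt_metric] by blast
  have w: "\<forall>x. 0 < w x \<and> w x \<le> 1" using G2' unfolding cond_G2'_def by (elim conjE) assumption
  have "\<exists>lam>0. \<forall>x\<in>X0. lam \<le> w x" using G2' unfolding cond_G2'_def by (elim conjE) assumption
  then obtain lam where lam: "lam > 0" "\<forall>x\<in>X0. lam \<le> w x" by blast
  obtain c3 where c3: "c3 \<ge> 1" and c3b: "\<forall>x\<in>X0. \<forall>s. 0 < s \<and> ereal s < S0 G X0 x \<longrightarrow>
        (\<forall>y. y \<notin> Vset G x s \<longrightarrow>
           emeasure (eps mu (closure (Vset G x s)) y) UNIV \<ge> ennreal (s / c3) * G y x)"
    using G3' unfolding cond_G3'_def by blast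
  define l where "l = min lam 1"
  have l: "0 < l" "l \<le> 1" "\<forall>x\<in>X0. l \<le> w x" using lam by (auto simp: l_def)
  have comp2: "\<forall>x y. Gt G w x y \<le> ennreal C * neg_pow (rt x y) \<gamma>" using comparable by blast
  have \<gamma>0: "\<gamma> > 0" and C0: "C > 0" using \<gamma> C by auto
  have Vs: "Vset G x (t powr \<gamma> / C) \<subseteq> Ut rt x t" if "t > 0" for x t
    using Vsub[OF rt_metric(1) rt_metric(2) G_pos w \<gamma>0 C0 comp2 that rtn] .
  have cl: "closure (Ut rt x t) \<subseteq> {z. rt x z \<le> t}" for x t
    by (rule closure_Ut_sub[OF rt_metric(3) rt_metric(2) rt_topology])
  define c3t where "c3t = c3 * 2 powr \<gamma> * C / l^2"
  show ?thesis
  proof (intro exI[of _ c3t] conjI ballI allI impI)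
    have p2: "2 powr \<gamma> \<ge> 1" using \<gamma> by (simp add: ge_one_powr_ge_zero)
    have "1 \<le> c3 * 2 powr \<gamma>" using mult_mono[OF c3 p2] c3 by simp
    then have "1 \<le> c3 * 2 powr \<gamma> * C" using mult_mono[OF _ C] by fastforce
    moreover have "l^2 \<le> 1" using l by (simp add: power_le_one)
    moreover have "l^2 > 0" using l by simp
    ultimately show "c3t \<ge> 1" unfolding c3t_def by (simp add: le_divide_eq_1_pos)
  next
    fix x r y assume x: "x \<in> X0" and r: "0 < r \<and> ereal r < R0t rt X0 x" and y: "y \<notin> Ut rt x r"
    obtain r' where r': "r < r'" "closure (Ut rt x r') \<subseteq> X0"
      using r unfolding R0t_def by (auto simp: less_Sup_iff)
    define B where "B = closure (Ut rt x r)"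
    have "Ut rt x r \<subseteq> Ut rt x r'" using r' by (auto simp: Ut_def)
    then have BX: "B \<subseteq> X0" using r' closure_mono unfolding B_def by blast
    define s where "s = (r/2) powr \<gamma> / C"
    have s0: "s > 0" using r C0 by (simp add: s_def)
    have VsUt: "Vset G x s \<subseteq> Ut rt x (r/2)" using Vs[of "r/2"] r s_def by simp
    have U2: "Ut rt x (r/2) \<subseteq> Ut rt x r" using r by (auto simp: Ut_def)
    have "closure (Vset G x s) \<subseteq> closure (Ut rt x (r/2))" using VsUt by (rule closure_mono)
    also have "\<dots> \<subseteq> {z. rt x z \<le> r/2}" by (rule cl)
    also have "\<dots> \<subseteq> Ut rt x r" using r by (auto simp: Ut_def)
    also have "\<dots> \<subseteq> B" unfolding B_def by (rule closure_subset)
    finally have AB: "closure (Vset G x s) \<subseteq> B" .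
    have yV: "y \<notin> Vset G x s" using VsUt U2 y by blast
    have sS: "ereal s < S0 G X0 x"
    proof -
      have "closure (Vset G x (r powr \<gamma> / C)) \<subseteq> B"
        unfolding B_def using Vs[of r] r by (simp add: closure_mono)
      then have "ereal (r powr \<gamma> / C) \<in> {ereal s | s. s > 0 \<and> closure (Vset G x s) \<subseteq> X0}"
        using BX r C0 by auto
      then have "ereal (r powr \<gamma> / C) \<le> S0 G X0 x" unfolding S0_def by (rule Sup_upper)
      moreover have "(r/2) powr \<gamma> < r powr \<gamma>" using r \<gamma>0 by (intro powr_less_mono2) auto
      then have "s < r powr \<gamma> / C" unfolding s_def using C0 by (simp add: divide_strict_right_mono)
      ultimately show ?thesis by (metis less_ereal.simps(1) order.strict_trans2)
    qed
    have G3: "ennreal (s / c3) * G y x \<le> emeasure (eps mu (closure (Vset G x s)) y) UNIV"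
      using c3b x s0 sS yV by blast
    have mono: "emeasure (eps mu (closure (Vset G x s)) y) UNIV \<le> emeasure (eps mu B y) UNIV"
      using eps_mono[OF kernel closed_closure _ AB] unfolding B_def by simp
    have wt: "ennreal (l / w y) * emeasure (eps mu B y) UNIV \<le> eps_tilde_norm mu w B y"
      by (rule eps_weight[OF kernel]) (use l BX w in \<open>auto simp: B_def\<close>)
    have wy: "0 < w y" "w y \<le> 1" and wx: "0 < w x" "l \<le> w x" using w l x by auto
    have Gy: "G y x = Gt G w y x * ennreal (w y * w x)"
      unfolding Gt_def by (rule G_Gt) (use wy wx in simp)
    have real: "r powr \<gamma> / c3t \<le> l / w y * (s / c3) * (w y * w x)"
    proof -
      have ll: "l * l \<le> l * w x" using l wx by (simp add: mult_left_mono)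
      have e1: "l / w y * (s / c3) * (w y * w x) = l * w x * (r powr \<gamma>) / (c3 * 2 powr \<gamma> * C)"
        using wy c3 C0 r by (simp add: s_def powr_divide field_simps)
      have e2: "r powr \<gamma> / c3t = l * l * (r powr \<gamma>) / (c3 * 2 powr \<gamma> * C)"
        using l c3 C0 by (simp add: c3t_def power2_eq_square field_simps)
      have "l * l * (r powr \<gamma>) \<le> l * w x * (r powr \<gamma>)" using ll by (simp add: mult_right_mono)
      then show ?thesis unfolding e1 e2 using c3 C0 by (simp add: divide_right_mono)
    qed
    have nn: "0 \<le> l / w y" "0 \<le> s / c3" "0 \<le> w y * w x" using l wy wx s0 c3 by auto
    have "ennreal (r powr \<gamma> / c3t) * Gt G w y x \<le> ennreal (l / w y * (s / c3) * (w y * w x)) * Gt G w y x"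
      by (rule mult_right_mono) (use real ennreal_leI in auto)
    also have "\<dots> = ennreal (l / w y) * (ennreal (s / c3) * (Gt G w y x * ennreal (w y * w x)))"
    proof -
      have "ennreal (l / w y * (s / c3) * (w y * w x)) = ennreal (l / w y) * ennreal (s / c3) * ennreal (w y * w x)"
        using nn by (metis ennreal_mult mult_nonneg_nonneg)
      then show ?thesis by (simp only: ac_simps)
    qed
    also have "\<dots> = ennreal (l / w y) * (ennreal (s / c3) * G y x)" using Gy by simp
    also have "\<dots> \<le> ennreal (l / w y) * emeasure (eps mu B y) UNIV"
      by (rule mult_left_mono) (use G3 mono in auto)
    also have "\<dots> \<le> eps_tilde_norm mu w B y" by (rule wt)
    finally show "eps_tilde_norm mu w (closure (Ut rt x r)) y \<ge> ennreal (r powr \<gamma> / c3t) * Gt G w y x"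
      unfolding B_def .
  qed
qed

end
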